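(* Let $G$ be a connected graph of order at least three. Then $\gamma_{cI}(G)=2\beta(G)$ if and only if $G\in\mathcal{G}$.
   Context: All graphs are finite and simple; $N(v)$ is the open neighborhood of $v$. A leaf is a vertex of degree one. $\beta(G)$ is the vertex cover number (minimum size of a set containing at least one endpoint of every edge). For $f:V(G)\to\{0,1,2\}$ let $V_i=\{v: f(v)=i\}$ and $\omega(f)=\sum_v f(v)$. A covering Italian dominating function (CID function) of $G$ is an $f:V(G)\to\{0,1,2\}$ such that every vertex $v$ with $f(v)=0$ satisfies $\sum_{u\in N(v)}f(u)\ge 2$, and $V_0$ is an independent set. $\gamma_{cI}(G)$ is the minimum of $\omega(f)$ over all CID functions of $G$. The family $\mathcal{G}$: a graph $G$ belongs to $\mathcal{G}$ if it is constructed from a graph $H$ (an induced subgraph of $G$) as follows: $S=V(G)\setminus V(H)$ is an independent set of $G$; every vertex of $H$ is joined to at least two vertices of $S$, at least one of which is a leaf of $G$; and for every $k\ge1$, any $k$ independent vertices of $H$, chosen among those vertices of $H$ adjacent to exactly one leaf in $S$, have (together) at least $k$ non-leaf (independent) neighbors in $S$. *)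

theory Defs
  imports Main
begin

definition graph :: "'a set \<Rightarrow> ('a \<Rightarrow> 'a \<Rightarrow> bool) \<Rightarrow> bool" where
  "graph V E \<longleftrightarrow> finite V \<and> (\<forall>x y. E x y \<longrightarrow> x \<in> V \<and> y \<in> V)
     \<and> (\<forall>x y. E x y \<longrightarrow> E y x) \<and> (\<forall>x. \<not> E x x)"

definition connected_graph :: "'a set \<Rightarrow> ('a \<Rightarrow> 'a \<Rightarrow> bool) \<Rightarrow> bool" where
  "connected_graph V E \<longleftrightarrow> (\<forall>x\<in>V. \<forall>y\<in>V. E\<^sup>*\<^sup>* x y)"

definition nbhd :: "'a set \<Rightarrow> ('a \<Rightarrow> 'a \<Rightarrow> bool) \<Rightarrow> 'a \<Rightarrow> 'a set" where
  "nbhd V E v = {u \<in> V. E v u}"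

definition leaf :: "'a set \<Rightarrow> ('a \<Rightarrow> 'a \<Rightarrow> bool) \<Rightarrow> 'a \<Rightarrow> bool" where
  "leaf V E v \<longleftrightarrow> v \<in> V \<and> card (nbhd V E v) = 1"

definition independent :: "('a \<Rightarrow> 'a \<Rightarrow> bool) \<Rightarrow> 'a set \<Rightarrow> bool" where
  "independent E A \<longleftrightarrow> (\<forall>x\<in>A. \<forall>y\<in>A. \<not> E x y)"

definition vertex_cover :: "'a set \<Rightarrow> ('a \<Rightarrow> 'a \<Rightarrow> bool) \<Rightarrow> 'a set \<Rightarrow> bool" where
  "vertex_cover V E C \<longleftrightarrow> C \<subseteq> V \<and> (\<forall>x y. E x y \<longrightarrow> x \<in> C \<or> y \<in> C)"

definition vc_number :: "'a set \<Rightarrow> ('a \<Rightarrow> 'a \<Rightarrow> bool) \<Rightarrow> nat" where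
  "vc_number V E = Min (card ` {C. vertex_cover V E C})"

text \<open>Covering Italian dominating function f : V \<rightarrow> {0,1,2} (values outside V irrelevant).\<close>
definition is_CID :: "'a set \<Rightarrow> ('a \<Rightarrow> 'a \<Rightarrow> bool) \<Rightarrow> ('a \<Rightarrow> nat) \<Rightarrow> bool" where
  "is_CID V E f \<longleftrightarrow> (\<forall>v\<in>V. f v \<le> 2)
     \<and> (\<forall>v\<in>V. f v = 0 \<longrightarrow> sum f (nbhd V E v) \<ge> 2)
     \<and> independent E {v \<in> V. f v = 0}"

definition gamma_cI :: "'a set \<Rightarrow> ('a \<Rightarrow> 'a \<Rightarrow> bool) \<Rightarrow> nat" where
  "gamma_cI V E = Min {sum f V | f. is_CID V E f}"

text \<open>Membership in the family \<G>.  H is the vertex set of the induced subgraph,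
  S = V - H.\<close>
definition in_family_G :: "'a set \<Rightarrow> ('a \<Rightarrow> 'a \<Rightarrow> bool) \<Rightarrow> bool" where
  "in_family_G V E \<longleftrightarrow> (\<exists>H \<subseteq> V.
     let S = V - H;
         H1 = {h \<in> H. card {s \<in> S. E h s \<and> leaf V E s} = 1}
     in independent E S
      \<and> (\<forall>h\<in>H. card {s \<in> S. E h s} \<ge> 2 \<and> (\<exists>s\<in>S. E h s \<and> leaf V E s))
      \<and> (\<forall>I \<subseteq> H1. I \<noteq> {} \<and> independent E I \<longrightarrow>
            card {s \<in> S. \<not> leaf V E s \<and> (\<exists>h\<in>I. E h s)} \<ge> card I))"

end

theory Submission
  imports Defs
begin

locale sg =
  fixes V :: "'a set" and E :: "'a \<Rightarrow> 'a \<Rightarrow> bool"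
  assumes gr: "graph V E" and noiso: "\<And>v. v \<in> V \<Longrightarrow> \<exists>u. E v u"
begin

lemma finV: "finite V" using gr unfolding graph_def by blast
lemma eV1: "E x y \<Longrightarrow> x \<in> V" using gr unfolding graph_def by blast
lemma eV2: "E x y \<Longrightarrow> y \<in> V" using gr unfolding graph_def by blast
lemma esym: "E x y \<Longrightarrow> E y x" using gr unfolding graph_def by blast
lemma eirr: "\<not> E x x" using gr unfolding graph_def by blast

lemma nbhd_fin: "finite (nbhd V E v)" using finV unfolding nbhd_def by simp

lemma leaf_uniq: "leaf V E s \<Longrightarrow> E s h \<Longrightarrow> E s h' \<Longrightarrow> h' = h"
proof -
  assume l: "leaf V E s" and a: "E s h" "E s h'"
  from l have "card (nbhd V E s) = 1" unfolding leaf_def by simp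
  then obtain x where x: "nbhd V E s = {x}" by (metis card_1_singletonE)
  have "h \<in> nbhd V E s" "h' \<in> nbhd V E s" using a eV2 unfolding nbhd_def by auto
  then show ?thesis using x by auto
qed

lemma leaf_nbhd: "leaf V E s \<Longrightarrow> E s h \<Longrightarrow> nbhd V E s = {h}"
  using leaf_uniq eV2 unfolding nbhd_def by blast

lemma leafI: "s \<in> V \<Longrightarrow> nbhd V E s = {h} \<Longrightarrow> leaf V E s"
  unfolding leaf_def by simp

definition CIDset where "CIDset = {sum f V | f. is_CID V E f}"

lemma CID_bound: "is_CID V E f \<Longrightarrow> sum f V \<le> 2 * card V"
proof -
  assume "is_CID V E f"
  then have "\<forall>v\<in>V. f v \<le> 2" unfolding is_CID_def by blast
  then have "sum f V \<le> sum (\<lambda>_. 2) V" by (intro sum_mono) auto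
  then show ?thesis by simp
qed

lemma CIDset_fin: "finite CIDset"
proof -
  have "CIDset \<subseteq> {..2 * card V}" unfolding CIDset_def using CID_bound by auto
  then show ?thesis using finite_subset by blast
qed

lemma CID_two: "is_CID V E (\<lambda>_. 2)"
  unfolding is_CID_def independent_def by auto

lemma gamma_le: "is_CID V E f \<Longrightarrow> gamma_cI V E \<le> sum f V"
  unfolding gamma_cI_def using CIDset_fin unfolding CIDset_def
  by (intro Min_le) auto

lemma gamma_in: "\<exists>f. is_CID V E f \<and> gamma_cI V E = sum f V"
proof -
  have "CIDset \<noteq> {}" using CID_two unfolding CIDset_def by blast
  then have "gamma_cI V E \<in> CIDset" unfolding gamma_cI_def CIDset_def[symmetric]
    using CIDset_fin Min_in by blast
  then show ?thesis unfolding CIDset_def by blast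
qed

lemma VCs_fin: "finite (card ` {C. vertex_cover V E C})"
proof -
  have "{C. vertex_cover V E C} \<subseteq> Pow V" unfolding vertex_cover_def by auto
  then show ?thesis using finV by (meson finite_Pow_iff finite_imageI finite_subset)
qed

lemma VC_V: "vertex_cover V E V" unfolding vertex_cover_def using eV1 by blast

lemma vc_le: "vertex_cover V E C \<Longrightarrow> vc_number V E \<le> card C"
  unfolding vc_number_def using VCs_fin by (intro Min_le) auto

lemma vc_in: "\<exists>C. vertex_cover V E C \<and> vc_number V E = card C"
proof -
  have "card ` {C. vertex_cover V E C} \<noteq> {}" using VC_V by blast
  then have "vc_number V E \<in> card ` {C. vertex_cover V E C}"
    unfolding vc_number_def using VCs_fin Min_in by blast
  then show ?thesis by auto
qed

lemma VC_CID: assumes "vertex_cover V E C"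
  shows "is_CID V E (\<lambda>v. if v \<in> C then 2 else 0)"
    and "sum (\<lambda>v. if v \<in> C then 2 else 0) V = 2 * card C"
proof -
  have CV: "C \<subseteq> V" using assms unfolding vertex_cover_def by auto
  show "sum (\<lambda>v. if v \<in> C then 2 else 0) V = 2 * card C"
    using CV finV by (simp add: sum.If_cases Int_absorb1)
  show "is_CID V E (\<lambda>v. if v \<in> C then 2 else 0)"
    unfolding is_CID_def
  proof (intro conjI ballI impI)
    fix v assume v: "v \<in> V" "(if v \<in> C then 2 else 0) = (0::nat)"
    then have vC: "v \<notin> C" by (auto split: if_splits)
    obtain u where u: "E v u" using noiso v by blast
    then have uC: "u \<in> C" using assms vC unfolding vertex_cover_def by blast
    have "u \<in> nbhd V E v" using u eV2 unfolding nbhd_def by auto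
    then have "(\<Sum>w\<in>{u}. (if w \<in> C then 2 else 0::nat)) \<le> sum (\<lambda>w. if w \<in> C then 2 else 0) (nbhd V E v)"
      by (intro sum_mono2 nbhd_fin) auto
    then show "2 \<le> sum (\<lambda>w. if w \<in> C then 2 else 0::nat) (nbhd V E v)" using uC by simp
  next
    show "independent E {v \<in> V. (if v \<in> C then 2 else 0) = (0::nat)}"
      using assms unfolding independent_def vertex_cover_def by auto
  qed auto
qed


lemma gamma_le_2vc: "gamma_cI V E \<le> 2 * vc_number V E"
proof -
  obtain C where "vertex_cover V E C" "vc_number V E = card C" using vc_in by blast
  then show ?thesis using VC_CID[of C] gamma_le by metis
qed

lemma fam_imp:
  assumes fam: "in_family_G V E"
  shows "gamma_cI V E = 2 * vc_number V E"
proof -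
  obtain H where HV: "H \<subseteq> V"
    and indS: "independent E (V - H)"
    and Hc: "\<forall>h\<in>H. card {s \<in> V - H. E h s} \<ge> 2 \<and> (\<exists>s\<in>V - H. E h s \<and> leaf V E s)"
    and hall: "\<forall>I \<subseteq> {h \<in> H. card {s \<in> V - H. E h s \<and> leaf V E s} = 1}. I \<noteq> {} \<and> independent E I \<longrightarrow>
            card {s \<in> V - H. \<not> leaf V E s \<and> (\<exists>h\<in>I. E h s)} \<ge> card I"
    using fam unfolding in_family_G_def Let_def by blast
  define S where "S = V - H"
  define L where "L h = {s \<in> S. E h s \<and> leaf V E s}" for h
  define H1 where "H1 = {h \<in> H. card (L h) = 1}"
  have finH: "finite H" using HV finV finite_subset by blast
  have finL: "finite (L h)" for h unfolding L_def S_def using finV by simp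
  have Lne: "L h \<noteq> {}" if "h \<in> H" for h using Hc that unfolding L_def S_def by blast
  have Ldisj: "L h \<inter> L h' = {}" if "h \<noteq> h'" for h h'
    using that leaf_uniq esym unfolding L_def by blast
  have LS: "L h \<subseteq> S" for h unfolding L_def by auto
  have "\<forall>h\<in>H. \<exists>s. s \<in> L h" using Lne by blast
  then obtain ell where ell: "\<forall>h\<in>H. ell h \<in> L h" using bchoice[of H "\<lambda>h s. s \<in> L h"] by blast
  have HVC: "vertex_cover V E H"
    unfolding vertex_cover_def using HV indS eV1 eV2 unfolding independent_def by blast
  have vcH: "vc_number V E = card H"
  proof (rule antisym)
    show "vc_number V E \<le> card H" using vc_le HVC by blast
  next
    obtain C where C: "vertex_cover V E C" "vc_number V E = card C" using vc_in by blast
    define g where "g h = (if h \<in> C then h else ell h)" for h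
    have "g ` H \<subseteq> C"
    proof
      fix x assume "x \<in> g ` H"
      then obtain h where h: "h \<in> H" "x = g h" by blast
      have "E h (ell h)" using ell h unfolding L_def by blast
      then show "x \<in> C" using C(1) h unfolding vertex_cover_def g_def by auto
    qed
    moreover have "inj_on g H"
    proof
      fix a b assume ab: "a \<in> H" "b \<in> H" "g a = g b"
      have la: "ell a \<in> L a" and lb: "ell b \<in> L b" using ell ab by auto
      show "a = b"
      proof (cases "a \<in> C")
        case True
        show ?thesis
        proof (cases "b \<in> C")
          case True then show ?thesis using ab \<open>a \<in> C\<close> unfolding g_def by simp
        next
          case False then have "a = ell b" using ab \<open>a \<in> C\<close> unfolding g_def by simp
          then show ?thesis using lb ab LS unfolding S_def by blast
        qed
      next
        case False
        show ?thesis
        proof (cases "b \<in> C")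
          case True then have "b = ell a" using ab \<open>a \<notin> C\<close> unfolding g_def by simp
          then show ?thesis using la ab LS unfolding S_def by blast
        next
          case False then have eq: "ell a = ell b" using ab \<open>a \<notin> C\<close> unfolding g_def by simp
          show ?thesis
          proof (rule ccontr)
            assume "a \<noteq> b"
            then have "L a \<inter> L b = {}" by (rule Ldisj)
            then show False using la lb eq by (metis IntI emptyE)
          qed
        qed
      qed
    qed
    moreover have "finite C" using C(1) finV finite_subset unfolding vertex_cover_def by blast
    ultimately have "card H \<le> card C" using card_inj_on_le by blast
    then show "card H \<le> vc_number V E" using C by simp
  qed
  obtain f where f: "is_CID V E f" "gamma_cI V E = sum f V" using gamma_in by blast
  have f2: "\<forall>v\<in>V. f v \<le> 2" and f0: "\<forall>v\<in>V. f v = 0 \<longrightarrow> sum f (nbhd V E v) \<ge> 2"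
    and find: "independent E {v \<in> V. f v = 0}" using f(1) unfolding is_CID_def by auto
  have nz: "f x \<noteq> 0 \<or> f y \<noteq> 0" if "E x y" for x y
    using find that eV1[OF that] eV2[OF that] unfolding independent_def by auto
  define c where "c h = f h + sum f (L h)" for h
  have cprop: "c h \<ge> 2 \<or> (f h = 0 \<and> h \<in> H1 \<and> c h \<ge> 1)" if hH: "h \<in> H" for h
  proof (cases "f h = 0")
    case True
    have "\<forall>s\<in>L h. 1 \<le> f s" using nz True unfolding L_def by fastforce
    then have "sum (\<lambda>_. 1) (L h) \<le> sum f (L h)" by (intro sum_mono) auto
    then have cc: "card (L h) \<le> c h" unfolding c_def by simp
    have "card (L h) \<ge> 1" using Lne[OF hH] finL by (simp add: Suc_leI card_gt_0_iff)
    then show ?thesis using cc True hH unfolding H1_def by fastforce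
  next
    case False
    obtain s where s: "s \<in> L h" using Lne hH by blast
    have "f s \<ge> 1 \<or> f h \<ge> 2"
    proof (cases "f s = 0")
      case True
      have "s \<in> V" "leaf V E s" "E s h" using s esym unfolding L_def S_def by auto
      then have "sum f (nbhd V E s) = f h" using leaf_nbhd by simp
      then show ?thesis using f0 True \<open>s \<in> V\<close> by auto
    qed simp
    moreover have "f s \<le> sum f (L h)" using s finL by (simp add: member_le_sum)
    ultimately show ?thesis using False unfolding c_def by auto
  qed
  define I where "I = {h \<in> H. c h < 2}"
  define N where "N = {s \<in> S. \<not> leaf V E s \<and> (\<exists>h\<in>I. E h s)}"
  have IH: "I \<subseteq> H" unfolding I_def by auto
  have IH1: "I \<subseteq> H1" and If0: "\<forall>h\<in>I. f h = 0" and Ic: "\<forall>h\<in>I. c h \<ge> 1"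
    using cprop unfolding I_def by fastforce+
  have cardN: "card N \<ge> card I"
  proof (cases "I = {}")
    case False
    have "independent E I" using find If0 IH HV unfolding independent_def by blast
    moreover have "I \<subseteq> {h \<in> H. card {s \<in> V - H. E h s \<and> leaf V E s} = 1}"
      using IH1 unfolding H1_def L_def S_def by simp
    ultimately show ?thesis using hall False unfolding N_def S_def by simp
  qed simp
  have finN: "finite N" unfolding N_def S_def using finV by simp
  have Nf: "\<forall>s\<in>N. f s \<ge> 1" using nz If0 unfolding N_def by fastforce
  have "card N \<le> sum f N" using Nf by (metis (no_types, lifting) card_eq_sum sum_mono)
  define U where "U = (\<Union>h\<in>H. L h)"
  have finU: "finite U" unfolding U_def using finH finL by blast
  have sumU: "sum f U = (\<Sum>h\<in>H. sum f (L h))" unfolding U_def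
    using finH finL Ldisj by (intro sum.UNION_disjoint) auto
  have sumHU: "sum f H + sum f U = (\<Sum>h\<in>H. c h)"
    unfolding sumU c_def by (simp add: sum.distrib)
  have "(\<Sum>h\<in>H. c h) = (\<Sum>h\<in>I. c h) + (\<Sum>h\<in>H - I. c h)"
    using finH IH by (metis add.commute sum.subset_diff)
  moreover have "(\<Sum>h\<in>I. c h) \<ge> card I" using Ic
    by (metis (no_types, lifting) card_eq_sum sum_mono)
  moreover have "(\<Sum>h\<in>H - I. c h) \<ge> 2 * card (H - I)"
  proof -
    have "(\<Sum>h\<in>H - I. (2::nat)) \<le> (\<Sum>h\<in>H - I. c h)" by (intro sum_mono) (auto simp: I_def)
    then show ?thesis by simp
  qed
  moreover have "card (H - I) + card I = card H" using IH finH
    by (metis card_Diff_subset finite_subset le_add_diff_inverse2 card_mono)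
  ultimately have "sum f H + sum f U + sum f N \<ge> 2 * card H"
    using sumHU \<open>card N \<le> sum f N\<close> cardN by linarith
  moreover have "sum f H + sum f U + sum f N = sum f (H \<union> U \<union> N)"
  proof -
    have d1: "H \<inter> U = {}" using LS unfolding U_def S_def by blast
    have d2: "(H \<union> U) \<inter> N = {}" using LS unfolding U_def S_def N_def L_def by blast
    show ?thesis using d1 d2 finH finU finN by (simp add: sum.union_disjoint)
  qed
  moreover have "sum f (H \<union> U \<union> N) \<le> sum f V"
    using LS HV finV unfolding U_def S_def N_def by (intro sum_mono2) auto
  ultimately have "gamma_cI V E \<ge> 2 * vc_number V E" using f(2) vcH by linarith
  then show ?thesis using gamma_le_2vc by simp
qed


definition w :: "'a set \<Rightarrow> 'a set \<Rightarrow> 'a \<Rightarrow> nat" where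
  "w A B = (\<lambda>v. if v \<in> A then 2 else if v \<in> B then 1 else 0)"

lemma w_sum: assumes "A \<subseteq> V" "B \<subseteq> V" "A \<inter> B = {}"
  shows "sum (w A B) V = 2 * card A + card B"
proof -
  have "sum (w A B) V = sum (\<lambda>v. (if v \<in> A then 2 else 0) + (if v \<in> B then 1 else 0)) V"
    using assms(3) unfolding w_def by (intro sum.cong) auto
  also have "\<dots> = sum (\<lambda>v. if v \<in> A then 2 else 0) V + sum (\<lambda>v. if v \<in> B then 1 else 0) V"
    by (simp add: sum.distrib)
  also have "\<dots> = 2 * card A + card B"
    using assms finV by (simp add: sum.If_cases Int_absorb1)
  finally show ?thesis .
qed

lemma w_CID: assumes "A \<subseteq> V" "B \<subseteq> V"
  and "\<And>v. v \<in> V \<Longrightarrow> v \<notin> A \<Longrightarrow> v \<notin> B \<Longrightarrow> 2 \<le> sum (w A B) (nbhd V E v)"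
  and "independent E (V - A - B)"
  shows "is_CID V E (w A B)"
proof -
  have "{v \<in> V. w A B v = 0} = V - A - B" unfolding w_def by auto
  then show ?thesis unfolding is_CID_def using assms(3,4) unfolding w_def by auto
qed

lemma nbsum1: assumes "E v u" shows "(f::'a\<Rightarrow>nat) u \<le> sum f (nbhd V E v)"
proof -
  have "u \<in> nbhd V E v" using assms eV2 unfolding nbhd_def by auto
  then show ?thesis using nbhd_fin by (intro member_le_sum) auto
qed

lemma nbsum2: assumes "E v u" "E v u'" "u \<noteq> u'"
  shows "f u + f u' \<le> sum (f::'a\<Rightarrow>nat) (nbhd V E v)"
proof -
  have "sum f {u, u'} \<le> sum f (nbhd V E v)"
    using nbhd_fin assms eV2 by (intro sum_mono2) (auto simp: nbhd_def)
  then show ?thesis using assms by simp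
qed

lemma w_A: "E v u \<Longrightarrow> u \<in> A \<Longrightarrow> 2 \<le> sum (w A B) (nbhd V E v)"
  using nbsum1[of v u "w A B"] unfolding w_def by auto

lemma w_AB: "E v u \<Longrightarrow> E v u' \<Longrightarrow> u \<noteq> u' \<Longrightarrow> u \<in> A \<union> B \<Longrightarrow> u' \<in> A \<union> B
   \<Longrightarrow> 2 \<le> sum (w A B) (nbhd V E v)"
  using nbsum2[of v u u' "w A B"] unfolding w_def by (auto split: if_splits)


lemma imp_fam:
  assumes conn: "\<forall>x\<in>V. \<forall>y\<in>V. E\<^sup>*\<^sup>* x y" and c3: "card V \<ge> 3"
    and eq: "gamma_cI V E = 2 * vc_number V E"
  shows "in_family_G V E"
proof -
  obtain C where C: "vertex_cover V E C" "vc_number V E = card C" using vc_in by blast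
  have CV: "C \<subseteq> V" using C unfolding vertex_cover_def by auto
  have cov: "E x y \<Longrightarrow> x \<in> C \<or> y \<in> C" for x y using C unfolding vertex_cover_def by auto
  have finC: "finite C" using CV finV finite_subset by blast
  define S where "S = V - C"
  have indS: "independent E S" unfolding S_def independent_def using cov by blast
  have low: False if "is_CID V E f" "sum f V < 2 * card C" for f
    using gamma_le[OF that(1)] that(2) eq C(2) by linarith
  have lowW: False if "A \<subseteq> V" "B \<subseteq> V" "A \<inter> B = {}" "2 * card A + card B < 2 * card C"
     "\<And>v. v \<in> V \<Longrightarrow> v \<notin> A \<Longrightarrow> v \<notin> B \<Longrightarrow> 2 \<le> sum (w A B) (nbhd V E v)"
     "independent E (V - A - B)" for A B
    using low[of "w A B"] w_CID[of A B] w_sum[of A B] that by auto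
  have leafnb: "\<exists>s\<in>S. E h s \<and> leaf V E s" if hC: "h \<in> C" for h
  proof (rule ccontr)
    assume nl: "\<not> (\<exists>s\<in>S. E h s \<and> leaf V E s)"
    show False
    proof (rule lowW[of "C - {h}" "{h}"])
      show "C - {h} \<subseteq> V" "{h} \<subseteq> V" "(C - {h}) \<inter> {h} = {}" using CV hC by auto
      have "card (C - {h}) + 1 = card C" using hC finC
        by (metis card_Diff1_less card_Suc_Diff1 Suc_eq_plus1)
      then show "2 * card (C - {h}) + card {h} < 2 * card C" by simp
      show "independent E (V - (C - {h}) - {h})"
        using indS unfolding S_def independent_def by auto
    next
      fix v assume v: "v \<in> V" "v \<notin> C - {h}" "v \<notin> {h}"
      then have vS: "v \<in> S" unfolding S_def by auto
      obtain u where u: "E v u" using noiso v by blast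
      then have uC: "u \<in> C" using cov vS unfolding S_def by auto
      show "2 \<le> sum (w (C - {h}) {h}) (nbhd V E v)"
      proof (cases "u = h")
        case False then show ?thesis using w_A[OF u, of "C - {h}" "{h}"] uC by auto
      next
        case True
        then have "\<not> leaf V E v" using nl vS u esym by blast
        then have "card (nbhd V E v) \<noteq> 1" using v unfolding leaf_def by simp
        moreover have "u \<in> nbhd V E v" using u eV2 unfolding nbhd_def by auto
        ultimately have "nbhd V E v \<noteq> {u}" by auto
        then obtain u' where u': "u' \<in> nbhd V E v" "u' \<noteq> u"
          using \<open>u \<in> nbhd V E v\<close> by blast
        then have "E v u'" unfolding nbhd_def by auto
        then have "u' \<in> C" using cov vS unfolding S_def by auto
        then show ?thesis using w_A[OF \<open>E v u'\<close>, of "C - {h}" "{h}"] u' True by auto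
      qed
    qed
  qed
  have two: "card {s \<in> S. E h s} \<ge> 2" if hC: "h \<in> C" for h
  proof (rule ccontr)
    assume lt: "\<not> card {s \<in> S. E h s} \<ge> 2"
    obtain s where s: "s \<in> S" "E h s" "leaf V E s" using leafnb hC by blast
    have fin: "finite {s \<in> S. E h s}" unfolding S_def using finV by simp
    have only: "s' = s" if "s' \<in> S" "E h s'" for s'
    proof (rule ccontr)
      assume "s' \<noteq> s"
      then have "card {s, s'} \<le> card {s \<in> S. E h s}"
        using fin s that by (intro card_mono) auto
      then show False using lt \<open>s' \<noteq> s\<close> by simp
    qed
    have sV: "s \<in> V" "s \<notin> C" using s unfolding S_def by auto
    show False
    proof (cases "\<exists>u\<in>C. E h u")
      case True
      then obtain u where u: "u \<in> C" "E h u" by blast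
      show False
      proof (rule lowW[of "C - {h}" "{s}"])
        show "C - {h} \<subseteq> V" "{s} \<subseteq> V" "(C - {h}) \<inter> {s} = {}" using CV sV by auto
        have "card (C - {h}) + 1 = card C" using hC finC
          by (metis card_Diff1_less card_Suc_Diff1 Suc_eq_plus1)
        then show "2 * card (C - {h}) + card {s} < 2 * card C" by simp
        show "independent E (V - (C - {h}) - {s})"
          unfolding independent_def
        proof (intro ballI notI)
          fix x y assume xy: "x \<in> V - (C - {h}) - {s}" "y \<in> V - (C - {h}) - {s}" "E x y"
          show False
          proof (cases "x = h")
            case True
            then have "y \<noteq> h" using xy eirr by auto
            then have "y \<in> S" using xy unfolding S_def by auto
            then show False using only xy True by auto
          next
            case False
            then have xS: "x \<in> S" using xy unfolding S_def by auto
            show False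
            proof (cases "y = h")
              case True
              then show False using only xy xS esym by blast
            next
              case False
              then have "y \<in> S" using xy unfolding S_def by auto
              then show False using xS xy indS unfolding independent_def by blast
            qed
          qed
        qed
      next
        fix v assume v: "v \<in> V" "v \<notin> C - {h}" "v \<notin> {s}"
        show "2 \<le> sum (w (C - {h}) {s}) (nbhd V E v)"
        proof (cases "v = h")
          case True
          have "u \<noteq> s" using u sV by auto
          moreover have "u \<in> C - {h}" using u eirr by auto
          ultimately show ?thesis using w_AB[of v u s "C - {h}" "{s}"] u s True by auto
        next
          case False
          then have vS: "v \<in> S" using v unfolding S_def by auto
          obtain u' where u': "E v u'" using noiso v by blast
          then have "u' \<in> C" using cov vS unfolding S_def by auto
          moreover have "u' \<noteq> h" using only vS u' esym v by auto
          ultimately show ?thesis using w_A[OF u', of "C - {h}" "{s}"] by auto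
        qed
      qed
    next
      case False
      have nbh: "E h y \<Longrightarrow> y = s" for y
        using False only cov hC eV2 unfolding S_def by blast
      have nbs: "E s y \<Longrightarrow> y = h" for y
        using leaf_uniq s esym by blast
      have reach: "E\<^sup>*\<^sup>* h x \<Longrightarrow> x \<in> {h, s}" for x
      proof (induction rule: rtranclp_induct)
        case base then show ?case by simp
      next
        case (step y z) then show ?case using nbh nbs by blast
      qed
      have "V \<subseteq> {h, s}" using reach conn CV hC by blast
      then have "card V \<le> card {h, s}" by (intro card_mono) auto
      also have "\<dots> \<le> 2" by (simp add: card_insert_le_m1)
      finally show False using c3 by simp
    qed
  qed
  define L where "L h = {s \<in> S. E h s \<and> leaf V E s}" for h
  define H1 where "H1 = {h \<in> C. card (L h) = 1}"
  have hall: "card {s \<in> S. \<not> leaf V E s \<and> (\<exists>h\<in>I. E h s)} \<ge> card I"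
    if I: "I \<subseteq> H1" "I \<noteq> {}" "independent E I" for I
  proof (rule ccontr)
    define N where "N = {s \<in> S. \<not> leaf V E s \<and> (\<exists>h\<in>I. E h s)}"
    define LI where "LI = {s \<in> S. leaf V E s \<and> (\<exists>h\<in>I. E h s)}"
    define NS where "NS = {s \<in> S. \<exists>h\<in>I. E h s}"
    assume "\<not> card {s \<in> S. \<not> leaf V E s \<and> (\<exists>h\<in>I. E h s)} \<ge> card I"
    then have Nlt: "card N < card I" unfolding N_def by simp
    have IC: "I \<subseteq> C" using I unfolding H1_def by auto
    have finI: "finite I" using IC finC finite_subset by blast
    have NSu: "NS = LI \<union> N" unfolding NS_def LI_def N_def by auto
    have finS: "finite S" unfolding S_def using finV by simp
    have "LI \<subseteq> (\<Union>h\<in>I. L h)" unfolding LI_def L_def by auto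
    then have "card LI \<le> card (\<Union>h\<in>I. L h)"
      using finI finS unfolding L_def by (intro card_mono) auto
    also have "\<dots> \<le> (\<Sum>h\<in>I. card (L h))" using finI by (rule card_UN_le)
    also have "\<dots> = (\<Sum>h\<in>I. 1)" using I(1) unfolding H1_def by (intro sum.cong) auto
    finally have LIle: "card LI \<le> card I" by simp
    have "card NS \<le> card LI + card N" unfolding NSu by (rule card_Un_le)
    then have NSlt: "card NS < 2 * card I" using LIle Nlt by linarith
    have cCI: "card (C - I) + card I = card C" using IC finC
      by (metis card_Diff_subset finite_subset le_add_diff_inverse2 card_mono)
    show False
    proof (rule lowW[of "C - I" NS])
      show "C - I \<subseteq> V" "NS \<subseteq> V" "(C - I) \<inter> NS = {}" using CV unfolding NS_def S_def by auto
      show "2 * card (C - I) + card NS < 2 * card C" using NSlt cCI by linarith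
      show "independent E (V - (C - I) - NS)"
        unfolding independent_def
      proof (intro ballI notI)
        fix x y assume xy: "x \<in> V - (C - I) - NS" "y \<in> V - (C - I) - NS" "E x y"
        show False
        proof (cases "x \<in> I")
          case True
          show False
          proof (cases "y \<in> I")
            case True then show False using \<open>x \<in> I\<close> xy I(3) unfolding independent_def by blast
          next
            case False then have "y \<in> S" using xy unfolding S_def by auto
            then have "y \<in> NS" using \<open>x \<in> I\<close> xy unfolding NS_def by blast
            then show False using xy by blast
          qed
        next
          case False
          then have xS: "x \<in> S" using xy unfolding S_def by auto
          show False
          proof (cases "y \<in> I")
            case True
            then have "x \<in> NS" using xS xy esym unfolding NS_def by blast
            then show False using xy by blast
          next
            case False then have "y \<in> S" using xy unfolding S_def by auto
            then show False using xS xy indS unfolding independent_def by blast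
          qed
        qed
      qed
    next
      fix v assume v: "v \<in> V" "v \<notin> C - I" "v \<notin> NS"
      show "2 \<le> sum (w (C - I) NS) (nbhd V E v)"
      proof (cases "v \<in> I")
        case True
        then have "card (L v) = 1" using I(1) unfolding H1_def by auto
        then obtain l where l: "L v = {l}" by (metis card_1_singletonE)
        have vC: "v \<in> C" using True IC by auto
        have "card {s \<in> S. E v s} \<ge> 2" using two vC by blast
        then have "card {s \<in> S. E v s} \<noteq> 1" "{s \<in> S. E v s} \<noteq> {}"
          by (auto simp del: Collect_empty_eq)
        moreover have "l \<in> {s \<in> S. E v s}" using l unfolding L_def by auto
        ultimately obtain s' where s': "s' \<in> S" "E v s'" "s' \<noteq> l"
          by (metis (no_types, lifting) card_1_singletonE insertI1 is_singletonI' is_singleton_altdef mem_Collect_eq)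
        have lS: "l \<in> S" "E v l" using l unfolding L_def by auto
        have "l \<in> NS" "s' \<in> NS" using lS s' True unfolding NS_def by auto
        then show ?thesis using w_AB[of v l s' "C - I" NS] lS s' by auto
      next
        case False
        then have vS: "v \<in> S" using v unfolding S_def by auto
        obtain u where u: "E v u" using noiso v by blast
        then have "u \<in> C" using cov vS unfolding S_def by auto
        moreover have "u \<notin> I" using u v vS esym unfolding NS_def by auto
        ultimately show ?thesis using w_A[OF u, of "C - I" NS] by auto
      qed
    qed
  qed
  show ?thesis
    unfolding in_family_G_def Let_def
  proof (intro exI[of _ C] conjI)
    show "C \<subseteq> V" by (rule CV)
    show "independent E (V - C)" using indS unfolding S_def .
    show "\<forall>h\<in>C. 2 \<le> card {s \<in> V - C. E h s} \<and> (\<exists>s\<in>V - C. E h s \<and> leaf V E s)"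
      using two leafnb unfolding S_def by blast
    show "\<forall>I\<subseteq>{h \<in> C. card {s \<in> V - C. E h s \<and> leaf V E s} = 1}. I \<noteq> {} \<and> independent E I \<longrightarrow>
        card I \<le> card {s \<in> V - C. \<not> leaf V E s \<and> (\<exists>h\<in>I. E h s)}"
      using hall unfolding H1_def L_def S_def by blast
  qed
qed

end

theorem theorem5:
  fixes V :: "'a set" and E :: "'a \<Rightarrow> 'a \<Rightarrow> bool"
  assumes "graph V E" and "connected_graph V E" and "card V \<ge> 3"
  shows "gamma_cI V E = 2 * vc_number V E \<longleftrightarrow> in_family_G V E"
proof -
  have conn: "\<forall>x\<in>V. \<forall>y\<in>V. E\<^sup>*\<^sup>* x y" using assms(2) unfolding connected_graph_def .
  have noiso: "\<exists>u. E v u" if v: "v \<in> V" for v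
  proof -
    have "card (V - {v}) \<ge> 2" using assms(3) v by simp
    then have "V - {v} \<noteq> {}" by (metis card.empty not_numeral_le_zero)
    then obtain x where x: "x \<in> V" "x \<noteq> v" by blast
    have "E\<^sup>*\<^sup>* v x" using conn v x by blast
    then show ?thesis using x by (cases rule: converse_rtranclpE) auto
  qed
  interpret sg V E using assms(1) noiso by unfold_locales auto
  show ?thesis using imp_fam[OF conn assms(3)] fam_imp by blast
qed

end
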